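(* Let $l\geq 1$ and $f\in C^{l-1}(\mathbb{R})$, and set $T_l(t)=\frac{(1-t)^{l+1}}{t}f(1-t)$ for $t>0$. Then $$[D^{l-1}T_{l}](t)=(-1)^{l-1}\sum_{m=0}^{l-1}P_{m,l}(t)f^{(m)}(1-t),$$ where $$P_{m,l}(t)=\sum_{\nu=m}^{l-1}E_{\nu,m,l}\frac{(1-t)^{\nu+2}}{t^{\nu+l-m}},\qquad E_{\nu,m,l}=\frac{(l-1)!}{2^{\nu-m}m!}\binom{l+1}{\nu+2}\binom{l-1+\nu-m}{\nu-m}.$$
   Context: $D$ denotes the operator $(D\varphi)(t)=\frac{1}{t}\varphi'(t)$ acting on functions of $t$ (here applied to $t\mapsto T_l(t)$), and $D^{j}$ its $j$-fold iterate. $\binom{a}{b}=0$ if $b>a$ or $b<0$. *)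

theory Defs
  imports "HOL-Analysis.Analysis"
begin

definition Ck :: "nat \<Rightarrow> (real \<Rightarrow> real) \<Rightarrow> bool" where
  "Ck k f \<longleftrightarrow> (\<forall>m<k. \<forall>x. ((deriv ^^ m) f) differentiable (at x))
                 \<and> (\<forall>m\<le>k. continuous_on UNIV ((deriv ^^ m) f))"

definition Dop :: "(real \<Rightarrow> real) \<Rightarrow> (real \<Rightarrow> real)" where
  "Dop \<phi> = (\<lambda>t. deriv \<phi> t / t)"

definition Tl :: "nat \<Rightarrow> (real \<Rightarrow> real) \<Rightarrow> real \<Rightarrow> real" where
  "Tl l f t = (1 - t) ^ (l + 1) / t * f (1 - t)"

definition Ecoef :: "nat \<Rightarrow> nat \<Rightarrow> nat \<Rightarrow> real" where
  "Ecoef \<nu> m l = fact (l - 1) / (2 ^ (\<nu> - m) * fact m)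
      * real ((l + 1) choose (\<nu> + 2)) * real ((l - 1 + \<nu> - m) choose (\<nu> - m))"

definition Pml :: "nat \<Rightarrow> nat \<Rightarrow> real \<Rightarrow> real" where
  "Pml m l t = (\<Sum>\<nu> = m..l - 1. Ecoef \<nu> m l * (1 - t) ^ (\<nu> + 2) / t ^ (\<nu> + l - m))"

end

theory Submission
  imports Defs
begin

fun W :: "nat \<Rightarrow> nat \<Rightarrow> real" where
  "W 0 q = (if q = 0 then 1 else 0)"
| "W (Suc j) q = W j q + (case q of 0 \<Rightarrow> 0 | Suc q' \<Rightarrow> real (j + q) * W j q')"

fun cf :: "nat \<Rightarrow> nat \<Rightarrow> nat \<Rightarrow> nat \<Rightarrow> real" where
  "cf l 0 q r = (if q = 0 \<and> r = 0 then 1 else 0)"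
| "cf l (Suc j) q r = - real (l + 1 + q + r - j) * cf l j q r
     - (case q of 0 \<Rightarrow> 0 | Suc q' \<Rightarrow> real (j + q) * cf l j q' r)
     - (case r of 0 \<Rightarrow> 0 | Suc r' \<Rightarrow> cf l j q r')"

definition ffl :: "nat \<Rightarrow> nat \<Rightarrow> real" where
  "ffl l p = (\<Prod>i<p. real (l + 1 - i))"

lemma W_zero: "j < q \<Longrightarrow> W j q = 0"
  by (induction j arbitrary: q) (auto split: nat.split)

lemma cf_zero: "j < q + r \<Longrightarrow> cf l j q r = 0"
  by (induction j arbitrary: q r) (auto split: nat.split)

lemma W_closed: "W (a + q) q * (fact a * fact q * 2 ^ q) = fact (a + 2 * q)"
proof (induction "a + q" arbitrary: a q)
  case 0
  then show ?case by simp
next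
  case (Suc j)
  have T1: "W j q * (fact a * fact q * 2 ^ q) = (if a = 0 then 0 else real a * fact (a + 2*q - 1))"
  proof (cases a)
    case 0 then show ?thesis using Suc by (simp add: W_zero)
  next
    case (Suc a')
    have "W (a' + q) q * (fact a' * fact q * 2 ^ q) = fact (a' + 2 * q)" using Suc.hyps(1)[of a' q] \<open>Suc j = a + q\<close> Suc by simp
    then show ?thesis using Suc \<open>Suc j = a + q\<close> by (simp add: algebra_simps)
  qed
  have T2: "(case q of 0 \<Rightarrow> 0 | Suc q' \<Rightarrow> real (j + q) * W j q') * (fact a * fact q * 2 ^ q)
      = (if q = 0 then 0 else 2 * real q * fact (a + 2*q - 1))"
  proof (cases q)
    case 0 then show ?thesis by simp
  next
    case (Suc q')
    have h: "W (a + q') q' * (fact a * fact q' * 2 ^ q') = fact (a + 2 * q')" using Suc.hyps(1)[of a q'] \<open>Suc j = a + q\<close> Suc by simp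
    have "j = a + q'" using Suc \<open>Suc j = a + q\<close> by simp
    then have "real (j + q) * W j q' * (fact a * fact q * 2 ^ q) = 2 * real q * (real (a + 2*q') + 1) * (W (a + q') q' * (fact a * fact q' * 2 ^ q'))"
      using Suc by (simp add: algebra_simps)
    also have "\<dots> = 2 * real q * fact (a + 2*q - 1)" using h Suc
      by (simp add: algebra_simps)
    finally show ?thesis using Suc by simp
  qed
  have "W (a + q) q * (fact a * fact q * 2 ^ q) = W j q * (fact a * fact q * 2 ^ q) + (case q of 0 \<Rightarrow> 0 | Suc q' \<Rightarrow> real (j + q) * W j q') * (fact a * fact q * 2 ^ q)"
    using \<open>Suc j = a + q\<close>[symmetric] by (simp add: algebra_simps)
  also have "\<dots> = fact (a + 2 * q)"
    unfolding T1 T2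
  proof -
    show "(if a = 0 then 0 else real a * fact (a + 2 * q - 1)) + (if q = 0 then 0 else 2 * real q * fact (a + 2 * q - 1)) = (fact (a + 2 * q) :: real)"
    proof (cases "a + 2*q")
      case 0 then show ?thesis using \<open>Suc j = a + q\<close> by simp
    next
      case (Suc n)
      then have "real (a + 2*q) = real (Suc n)" by simp
      then have e: "real a + 2 * real q = real n + 1" by simp
      have n1: "a + 2 * q - 1 = n" using Suc by simp
      have "(if a = 0 then 0 else real a * fact (a + 2 * q - 1)) + (if q = 0 then 0 else 2 * real q * fact (a + 2 * q - 1)) = (real a + 2 * real q) * (fact n :: real)"
        unfolding n1 by (simp add: distrib_right)
      also have "\<dots> = fact (a + 2*q)" unfolding Suc e by simp
      finally show ?thesis .
    qed
  qed
  finally show ?case .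
qed

lemma binom_aux: assumes "p + r > 0" shows "(if p = 0 then 0 else (p - 1 + r) choose r) + (if r = 0 then 0 else (p + r - 1) choose (r - 1)) = (p + r) choose r"
proof (cases p)
  case 0 then show ?thesis using assms by (cases r) auto
next
  case (Suc p')
  then show ?thesis
  proof (cases r)
    case 0 then show ?thesis using Suc by simp
  next
    case (Suc r')
    then show ?thesis using \<open>p = Suc p'\<close> by simp
  qed
qed

lemma ffl_Suc: "ffl l (Suc p) = ffl l p * real (l + 1 - p)"
  unfolding ffl_def by simp

lemma cf_closed: "p + q + r \<le> l \<Longrightarrow>
  cf l (p + q + r) q r = (-1) ^ (p + q + r) * real ((p + r) choose r) * ffl l p * W (p + q + r) q"
proof (induction "p + q + r" arbitrary: p q r)
  case 0
  then show ?case by (simp add: ffl_def)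
next
  case (Suc j)
  note hj = \<open>Suc j = p + q + r\<close>
  have T1: "- real (l + 1 + q + r - j) * cf l j q r = (-1) ^ Suc j * real (if p = 0 then 0 else (p - 1 + r) choose r) * ffl l p * W j q"
  proof (cases p)
    case 0 then show ?thesis using hj by (simp add: cf_zero)
  next
    case (Suc p')
    have "cf l j q r = (-1) ^ j * real ((p' + r) choose r) * ffl l p' * W j q"
      using Suc.hyps(1)[of p' q r] Suc.prems hj Suc by simp
    moreover have "l + 1 + q + r - j = l + 1 - p'" using hj Suc by simp
    ultimately show ?thesis using Suc by (simp add: ffl_Suc)
  qed
  have T2: "- (case q of 0 \<Rightarrow> 0 | Suc q' \<Rightarrow> real (j + q) * cf l j q' r) = (-1) ^ Suc j * real ((p + r) choose r) * ffl l p * (case q of 0 \<Rightarrow> 0 | Suc q' \<Rightarrow> real (j + q) * W j q')"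
  proof (cases q)
    case 0 then show ?thesis by simp
  next
    case (Suc q')
    have "cf l j q' r = (-1) ^ j * real ((p + r) choose r) * ffl l p * W j q'"
      using Suc.hyps(1)[of p q' r] Suc.prems hj Suc by simp
    then show ?thesis using Suc by simp
  qed
  have T3: "- (case r of 0 \<Rightarrow> 0 | Suc r' \<Rightarrow> cf l j q r') = (-1) ^ Suc j * real (if r = 0 then 0 else (p + r - 1) choose (r - 1)) * ffl l p * W j q"
  proof (cases r)
    case 0 then show ?thesis by simp
  next
    case (Suc r')
    have "cf l j q r' = (-1) ^ j * real ((p + r') choose r') * ffl l p * W j q"
      using Suc.hyps(1)[of p q r'] Suc.prems hj Suc by simp
    then show ?thesis using Suc by simp
  qed
  have B: "(real (if p = 0 then 0 else (p - 1 + r) choose r) + real (if r = 0 then 0 else (p + r - 1) choose (r - 1))) * W j q = real ((p + r) choose r) * W j q"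
  proof (cases "p + r > 0")
    case True then show ?thesis using binom_aux[of p r] by (metis of_nat_add)
  next
    case False then show ?thesis using hj by (simp add: W_zero)
  qed
  have "cf l (Suc j) q r = (-1) ^ Suc j * ffl l p * ((real (if p = 0 then 0 else (p - 1 + r) choose r) + real (if r = 0 then 0 else (p + r - 1) choose (r - 1))) * W j q
     + real ((p + r) choose r) * (case q of 0 \<Rightarrow> 0 | Suc q' \<Rightarrow> real (j + q) * W j q'))"
    apply (subst cf.simps(2))
    unfolding diff_conv_add_uminus T1 T2 T3 by (simp add: algebra_simps)
  also have "\<dots> = (-1) ^ Suc j * real ((p + r) choose r) * ffl l p * W (Suc j) q"
    using B by (simp add: algebra_simps)
  finally show ?case using hj by simp
qed

definition trm :: "(nat \<Rightarrow> real \<Rightarrow> real) \<Rightarrow> nat \<Rightarrow> nat \<Rightarrow> nat \<Rightarrow> nat \<Rightarrow> real \<Rightarrow> real" where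
  "trm g l j q r t = (1 - t) ^ (l + 1 + q + r - j) / t ^ (1 + j + q) * g r (1 - t)"

lemma trm_deriv:
  assumes "j \<le> l" "t \<noteq> 0" "(g r has_real_derivative g (Suc r) (1 - t)) (at (1 - t))"
  shows "(trm g l j q r has_real_derivative
     t * (- real (l + 1 + q + r - j) * trm g l (Suc j) q r t - real (1 + j + q) * trm g l (Suc j) (Suc q) r t
          - trm g l (Suc j) q (Suc r) t)) (at t)"
proof -
  define A where "A = l + q + r - j"
  define B where "B = j + q"
  have eA: "l + 1 + q + r - j = Suc A" "l + 1 + q + r - Suc j = A" "l + 1 + Suc q + r - Suc j = Suc A"
    "l + 1 + q + Suc r - Suc j = Suc A"
    using assms(1) unfolding A_def by auto
  have d1: "((\<lambda>t. g r (1 - t)) has_real_derivative (g (Suc r) (1 - t) * (-1))) (at t)"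
    by (rule DERIV_chain2[where f="g r" and g="\<lambda>t. 1 - t", OF assms(3)]) (auto intro!: derivative_eq_intros)
  have eq: "trm g l j q r = (\<lambda>t. (1 - t) ^ Suc A / t ^ Suc B * g r (1 - t))"
    unfolding trm_def eA B_def by (simp add: fun_eq_iff)
  have "((\<lambda>t. (1 - t) ^ Suc A / t ^ Suc B * g r (1 - t)) has_real_derivative
     t * (- real (Suc A) * ((1 - t) ^ A / t ^ Suc (Suc B) * g r (1 - t))
          - real (Suc B) * ((1 - t) ^ Suc A / t ^ Suc (Suc (Suc B)) * g r (1 - t))
          - ((1 - t) ^ Suc A / t ^ Suc (Suc B) * g (Suc r) (1 - t)))) (at t)"
    apply (rule derivative_eq_intros d1 refl | simp add: assms(2))+
    apply (simp add: field_simps assms(2))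
    done
  then show ?thesis unfolding eq unfolding trm_def eA B_def by (simp add: algebra_simps)
qed

lemma shift_case: "(\<Sum>q\<le>Suc j. (case q of 0 \<Rightarrow> 0 | Suc q' \<Rightarrow> h q')) = (\<Sum>q\<le>j. h q :: real)"
  by (subst sum.atMost_Suc_shift) simp

lemma sum_step:
  fixes X :: "nat \<Rightarrow> nat \<Rightarrow> real"
  shows "(\<Sum>q\<le>j. \<Sum>r\<le>j. cf l j q r * (- real (l + 1 + q + r - j) * X q r - real (1 + j + q) * X (Suc q) r - X q (Suc r)))
     = (\<Sum>q\<le>Suc j. \<Sum>r\<le>Suc j. cf l (Suc j) q r * X q r)"
proof -
  have R1: "(\<Sum>q\<le>Suc j. \<Sum>r\<le>Suc j. - real (l + 1 + q + r - j) * cf l j q r * X q r)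
     = (\<Sum>q\<le>j. \<Sum>r\<le>j. - real (l + 1 + q + r - j) * cf l j q r * X q r)"
    by (simp add: sum.atMost_Suc cf_zero)
  have R2: "(\<Sum>q\<le>Suc j. \<Sum>r\<le>Suc j. (case q of 0 \<Rightarrow> 0 | Suc q' \<Rightarrow> real (j + q) * cf l j q' r) * X q r)
     = (\<Sum>q\<le>j. \<Sum>r\<le>j. real (1 + j + q) * cf l j q r * X (Suc q) r)"
  proof -
    have "(\<Sum>q\<le>Suc j. \<Sum>r\<le>Suc j. (case q of 0 \<Rightarrow> 0 | Suc q' \<Rightarrow> real (j + q) * cf l j q' r) * X q r)
       = (\<Sum>q\<le>Suc j. (case q of 0 \<Rightarrow> 0 | Suc q' \<Rightarrow> \<Sum>r\<le>Suc j. real (1 + j + q') * cf l j q' r * X (Suc q') r))"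
      by (rule sum.cong) (auto split: nat.split)
    also have "\<dots> = (\<Sum>q\<le>j. \<Sum>r\<le>Suc j. real (1 + j + q) * cf l j q r * X (Suc q) r)"
      by (rule shift_case)
    also have "\<dots> = (\<Sum>q\<le>j. \<Sum>r\<le>j. real (1 + j + q) * cf l j q r * X (Suc q) r)"
      by (simp add: sum.atMost_Suc cf_zero)
    finally show ?thesis .
  qed
  have R3: "(\<Sum>q\<le>Suc j. \<Sum>r\<le>Suc j. (case r of 0 \<Rightarrow> 0 | Suc r' \<Rightarrow> cf l j q r') * X q r)
     = (\<Sum>q\<le>j. \<Sum>r\<le>j. cf l j q r * X q (Suc r))"
  proof -
    have "(\<Sum>q\<le>Suc j. \<Sum>r\<le>Suc j. (case r of 0 \<Rightarrow> 0 | Suc r' \<Rightarrow> cf l j q r') * X q r)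
       = (\<Sum>q\<le>Suc j. \<Sum>r\<le>Suc j. (case r of 0 \<Rightarrow> 0 | Suc r' \<Rightarrow> cf l j q r' * X q (Suc r')))"
      by (intro sum.cong refl) (auto split: nat.split)
    also have "\<dots> = (\<Sum>q\<le>Suc j. \<Sum>r\<le>j. cf l j q r * X q (Suc r))"
      by (intro sum.cong refl shift_case)
    also have "\<dots> = (\<Sum>q\<le>j. \<Sum>r\<le>j. cf l j q r * X q (Suc r))"
      by (simp add: sum.atMost_Suc cf_zero)
    finally show ?thesis .
  qed
  have "(\<Sum>q\<le>Suc j. \<Sum>r\<le>Suc j. cf l (Suc j) q r * X q r)
     = (\<Sum>q\<le>Suc j. \<Sum>r\<le>Suc j. - real (l + 1 + q + r - j) * cf l j q r * X q r)
     - (\<Sum>q\<le>Suc j. \<Sum>r\<le>Suc j. (case q of 0 \<Rightarrow> 0 | Suc q' \<Rightarrow> real (j + q) * cf l j q' r) * X q r)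
     - (\<Sum>q\<le>Suc j. \<Sum>r\<le>Suc j. (case r of 0 \<Rightarrow> 0 | Suc r' \<Rightarrow> cf l j q r') * X q r)"
    by (simp only: cf.simps sum_subtractf[symmetric] left_diff_distrib)
  also have "\<dots> = (\<Sum>q\<le>j. \<Sum>r\<le>j. - real (l + 1 + q + r - j) * cf l j q r * X q r)
     - (\<Sum>q\<le>j. \<Sum>r\<le>j. real (1 + j + q) * cf l j q r * X (Suc q) r)
     - (\<Sum>q\<le>j. \<Sum>r\<le>j. cf l j q r * X q (Suc r))"
    unfolding R1 R2 R3 ..
  also have "\<dots> = (\<Sum>q\<le>j. \<Sum>r\<le>j. cf l j q r * (- real (l + 1 + q + r - j) * X q r - real (1 + j + q) * X (Suc q) r - X q (Suc r)))"
    by (simp add: sum_subtractf[symmetric] algebra_simps)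
  finally show ?thesis by simp
qed

definition S :: "(nat \<Rightarrow> real \<Rightarrow> real) \<Rightarrow> nat \<Rightarrow> nat \<Rightarrow> real \<Rightarrow> real" where
  "S g l j t = (\<Sum>q\<le>j. \<Sum>r\<le>j. cf l j q r * trm g l j q r t)"

lemma S_deriv:
  assumes "j \<le> l" "t \<noteq> 0" "\<And>r. r \<le> j \<Longrightarrow> (g r has_real_derivative g (Suc r) (1 - t)) (at (1 - t))"
  shows "(S g l j has_real_derivative t * S g l (Suc j) t) (at t)"
proof -
  have "((\<lambda>t. S g l j t) has_real_derivative (\<Sum>q\<le>j. \<Sum>r\<le>j. cf l j q r *
     (t * (- real (l + 1 + q + r - j) * trm g l (Suc j) q r t - real (1 + j + q) * trm g l (Suc j) (Suc q) r t
          - trm g l (Suc j) q (Suc r) t)))) (at t)"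
    unfolding S_def
    by (intro DERIV_sum DERIV_cmult trm_deriv assms) auto
  moreover have "(\<Sum>q\<le>j. \<Sum>r\<le>j. cf l j q r *
     (t * (- real (l + 1 + q + r - j) * trm g l (Suc j) q r t - real (1 + j + q) * trm g l (Suc j) (Suc q) r t
          - trm g l (Suc j) q (Suc r) t))) = t * S g l (Suc j) t"
    unfolding S_def sum_step[symmetric, where X="\<lambda>q r. trm g l (Suc j) q r t"]
    by (simp add: sum_distrib_left algebra_simps)
  ultimately show ?thesis by simp
qed

lemma iter:
  assumes "Ck (l - 1) f"
  shows "j \<le> l - 1 \<Longrightarrow> t > 0 \<Longrightarrow> (Dop ^^ j) (Tl l f) t = S (\<lambda>r. (deriv ^^ r) f) l j t"
proof (induction j arbitrary: t)
  case 0
  then show ?case by (simp add: S_def trm_def Tl_def)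
next
  case (Suc j)
  let ?g = "\<lambda>r. (deriv ^^ r) f"
  have dg: "(?g r has_real_derivative ?g (Suc r) (1 - t)) (at (1 - t))" if "r \<le> j" for r
  proof -
    have "?g r differentiable (at (1 - t))" using assms that Suc.prems unfolding Ck_def by auto
    then show ?thesis using DERIV_deriv_iff_real_differentiable by fastforce
  qed
  have d: "(S ?g l j has_real_derivative t * S ?g l (Suc j) t) (at t)"
    using Suc.prems by (intro S_deriv dg) auto
  have d2: "((Dop ^^ j) (Tl l f) has_real_derivative t * S ?g l (Suc j) t) (at t)"
    by (rule has_field_derivative_transform_within_open[OF d, of "{0<..}"])
       (use Suc in auto)
  have "(Dop ^^ Suc j) (Tl l f) t = deriv ((Dop ^^ j) (Tl l f)) t / t"
    by (simp add: Dop_def)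
  also have "\<dots> = S ?g l (Suc j) t" using DERIV_imp_deriv[OF d2] Suc.prems by simp
  finally show ?case .
qed

lemma ffl_fact: "p \<le> l + 1 \<Longrightarrow> ffl l p * fact (l + 1 - p) = fact (l + 1)"
proof (induction p)
  case 0 then show ?case by (simp add: ffl_def)
next
  case (Suc p)
  have "l + 1 - p = Suc (l + 1 - Suc p)" using Suc.prems by simp
  then have e: "fact (l + 1 - p) = real (l + 1 - p) * (fact (l + 1 - Suc p) :: real)"
    by (metis fact_Suc of_nat_Suc)
  have "ffl l (Suc p) * fact (l + 1 - Suc p) = ffl l p * (real (l + 1 - p) * fact (l + 1 - Suc p))"
    by (simp only: ffl_Suc mult.assoc)
  also have "\<dots> = fact (l + 1)" using e Suc by simp
  finally show ?case .
qed

lemma coef: "real ((p + r) choose r) * ffl (p + q + r + 1) p * W (p + q + r) q = Ecoef (q + r) r (p + q + r + 1)"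
proof -
  have w0: "W (p + r + q) q * (fact (p + r) * fact q * 2 ^ q) = fact (p + r + 2 * q)" by (rule W_closed)
  have w: "W (p + q + r) q = fact (p + r + 2 * q) / (fact (p + r) * fact q * 2 ^ q)"
    using w0 by (simp add: field_simps add.commute add.left_commute)
  have f0: "ffl (p + q + r + 1) p * fact (p + q + r + 1 + 1 - p) = fact (p + q + r + 1 + 1)" by (rule ffl_fact) simp
  have f: "ffl (p + q + r + 1) p = fact (p + q + r + 2) / fact (q + r + 2)"
  proof -
    have e: "p + q + r + 1 + 1 - p = q + r + 2" "p + q + r + 1 + 1 = p + q + r + 2" by simp_all
    have e3: "p + q + r + 2 - p = q + r + 2" by simp
    have f1: "ffl (p + q + r + 1) p * fact (q + r + 2) = fact (p + q + r + 2)"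
      using f0 by (simp only: e e3)
    show ?thesis by (metis f1 fact_nonzero nonzero_eq_divide_eq)
  qed
  have b1: "real ((p + r) choose r) = fact (p + r) / (fact r * fact p)"
    by (simp add: binomial_fact)
  have b2: "real ((p + q + r + 1 + 1) choose (q + r + 2)) = fact (p + q + r + 2) / (fact (q + r + 2) * fact p)"
    by (subst binomial_fact) (auto simp: numeral_2_eq_2)
  have b3: "real ((p + q + r + (q + r) - r) choose q) = fact (p + r + 2 * q) / (fact q * fact (p + q + r))"
    by (subst binomial_fact) (auto simp: numeral_2_eq_2 algebra_simps)
  have gen: "\<And>A R P N2 Q2 M Qf T N :: real. A \<noteq> 0 \<Longrightarrow> R \<noteq> 0 \<Longrightarrow> P \<noteq> 0 \<Longrightarrow> Q2 \<noteq> 0 \<Longrightarrow> Qf \<noteq> 0 \<Longrightarrow> T \<noteq> 0 \<Longrightarrow> N \<noteq> 0 \<Longrightarrow>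
     A / (R * P) * (N2 / Q2) * (M / (A * Qf * T)) = N / (T * R) * (N2 / (Q2 * P)) * (M / (Qf * N))"
    by (simp add: field_simps)
  have e1: "p + q + r + 1 - 1 = p + q + r" "q + r - r = q" by simp_all
  show ?thesis
    unfolding Ecoef_def e1 unfolding w f b1 b2 b3
    by (rule gen) simp_all
qed

lemma inner:
  assumes "r \<le> n"
  shows "(\<Sum>q\<le>n. cf (Suc n) n q r * trm g (Suc n) n q r t) = (-1) ^ n * (Pml r (Suc n) t * g r (1 - t))"
proof -
  have "(\<Sum>q\<le>n. cf (Suc n) n q r * trm g (Suc n) n q r t) = (\<Sum>q\<in>{0..n-r}. cf (Suc n) n q r * trm g (Suc n) n q r t)"
    by (rule sum.mono_neutral_right) (auto simp: cf_zero)
  also have "\<dots> = (\<Sum>q\<in>{0..n-r}. (-1) ^ n * (Ecoef (q + r) r (Suc n) * (1 - t) ^ (q + r + 2) / t ^ (q + r + Suc n - r) * g r (1 - t)))"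
  proof (rule sum.cong[OF refl])
    fix q assume "q \<in> {0..n-r}"
    then have qn: "q \<le> n - r" by simp
    define p where "p = n - q - r"
    have pn: "n = p + q + r" using qn assms unfolding p_def by simp
    have c: "cf (Suc n) n q r = (-1) ^ n * Ecoef (q + r) r (Suc n)"
      using cf_closed[of p q r "Suc n"] coef[of p r q] pn by simp
    have e: "Suc n + 1 + q + r - n = q + r + 2" "1 + n + q = q + r + Suc n - r" by simp_all
    show "cf (Suc n) n q r * trm g (Suc n) n q r t = (-1) ^ n * (Ecoef (q + r) r (Suc n) * (1 - t) ^ (q + r + 2) / t ^ (q + r + Suc n - r) * g r (1 - t))"
      unfolding c trm_def e by simp
  qed
  also have "\<dots> = (-1) ^ n * ((\<Sum>q\<in>{0..n-r}. Ecoef (q + r) r (Suc n) * (1 - t) ^ (q + r + 2) / t ^ (q + r + Suc n - r)) * g r (1 - t))"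
    by (simp add: sum_distrib_left sum_distrib_right mult.assoc)
  also have "(\<Sum>q\<in>{0..n-r}. Ecoef (q + r) r (Suc n) * (1 - t) ^ (q + r + 2) / t ^ (q + r + Suc n - r)) = Pml r (Suc n) t"
  proof -
    have "{r..n} = {0 + r..(n - r) + r}" using assms by simp
    then show ?thesis unfolding Pml_def
      by (simp only: sum.shift_bounds_cl_nat_ivl diff_Suc_1)
  qed
  finally show ?thesis .
qed

theorem lemma3p4:
  fixes f :: "real \<Rightarrow> real" and l :: nat and t :: real
  assumes "l \<ge> 1" and "Ck (l - 1) f" and "t > 0"
  shows "(Dop ^^ (l - 1)) (Tl l f) t
         = (-1) ^ (l - 1) * (\<Sum>m = 0..l - 1. Pml m l t * (deriv ^^ m) f (1 - t))"
proof -
  obtain n where ln: "l = Suc n" using assms(1) by (cases l) auto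
  let ?g = "\<lambda>r. (deriv ^^ r) f"
  have "(Dop ^^ (l - 1)) (Tl l f) t = S ?g l (l - 1) t"
    by (rule iter[OF assms(2)]) (use assms in auto)
  also have "\<dots> = (\<Sum>r\<le>n. \<Sum>q\<le>n. cf (Suc n) n q r * trm ?g (Suc n) n q r t)"
    unfolding S_def ln diff_Suc_1 by (rule sum.swap)
  also have "\<dots> = (\<Sum>r\<le>n. (-1) ^ n * (Pml r (Suc n) t * ?g r (1 - t)))"
    by (rule sum.cong[OF refl]) (simp add: inner)
  also have "\<dots> = (-1) ^ (l - 1) * (\<Sum>m = 0..l - 1. Pml m l t * (deriv ^^ m) f (1 - t))"
    unfolding ln by (simp add: sum_distrib_left atLeast0AtMost)
  finally show ?thesis .
qed

end
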